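(* $\dim_H F(1/2,1)\le \frac12$.
   Context: Every $x\in(0,1)\setminus\mathbb{Q}$ has a unique infinite continued fraction expansion $x=[a_1(x),a_2(x),\dots]$ with partial quotients $a_i(x)\in\mathbb{N}=\{1,2,\dots\}$. For $n\in\mathbb{N}$ let $T_n(x):=\max\{a_k(x):1\le k\le n\}$. Define $$F(1/2,1):=\Big\{x\in(0,1)\setminus\mathbb{Q}:\ \lim_{n\to\infty}\frac{T_n(x)}{e^{\sqrt{n}}}=1\Big\}.$$ $\dim_H$ denotes Hausdorff dimension. *)

theory Defs
  imports "HOL-Analysis.Analysis"
begin

definition gauss_map :: "real \<Rightarrow> real" where
  "gauss_map x = frac (1 / x)"

(* n-th partial quotient a_n(x), n \<ge> 1: a_n(x) = floor (1 / G^(n-1)(x)) *)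
definition cf_quot :: "real \<Rightarrow> nat \<Rightarrow> nat" where
  "cf_quot x n = nat \<lfloor>1 / ((gauss_map ^^ (n - 1)) x)\<rfloor>"

definition cf_max :: "nat \<Rightarrow> real \<Rightarrow> nat" where
  "cf_max n x = Max ((cf_quot x) ` {1..n})"

definition F_half_one :: "real set" where
  "F_half_one = {x \<in> {0<..<1} - \<rat>.
      (\<lambda>n. real (cf_max n x) / exp (sqrt (real n))) \<longlonglongrightarrow> 1}"

(* |U|^s with the convention 0^0 = 1 (only used for nonempty U) *)
definition diam_pow :: "real \<Rightarrow> real \<Rightarrow> real" where
  "diam_pow d s = (if s = 0 then 1 else d powr s)"

definition hausdorff_pre :: "real \<Rightarrow> real \<Rightarrow> 'a::metric_space set \<Rightarrow> ennreal" where
  "hausdorff_pre s \<delta> E = (INF U \<in> {U :: nat \<Rightarrow> 'a set. E \<subseteq> (\<Union>i. U i) \<and> (\<forall>i. bounded (U i) \<and> diameter (U i) \<le> \<delta>)}.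
      (\<Sum>i. if U i = {} then 0 else ennreal (diam_pow (diameter (U i)) s)))"

definition hausdorff_measure :: "real \<Rightarrow> 'a::metric_space set \<Rightarrow> ennreal" where
  "hausdorff_measure s E = (SUP \<delta> \<in> {0<..}. hausdorff_pre s \<delta> E)"

definition hausdorff_dim :: "'a::metric_space set \<Rightarrow> ereal" where
  "hausdorff_dim E = Inf {ereal s | s. s \<ge> 0 \<and> hausdorff_measure s E = 0}"

end

theory Submission
  imports Defs
begin


definition hterm :: "real \<Rightarrow> real set \<Rightarrow> ennreal" where
  "hterm s V = (if V = {} then 0 else ennreal (diam_pow (diameter V) s))"

lemma hp_le:
  fixes E :: "real set"
  assumes "E \<subseteq> (\<Union>i. U i)" "\<And>i. bounded (U i)" "\<And>i. diameter (U i) \<le> \<delta>"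
  shows "hausdorff_pre s \<delta> E \<le> (\<Sum>i. hterm s (U i))"
  unfolding hausdorff_pre_def hterm_def
  by (rule INF_lower2[of U]) (use assms in auto)

lemma hp_mono:
  fixes A :: "real set"
  assumes "A \<subseteq> B" shows "hausdorff_pre s \<delta> A \<le> hausdorff_pre s \<delta> B"
  unfolding hausdorff_pre_def
  by (rule INF_superset_mono) (use assms in auto)

lemma hp_finite:
  fixes E :: "real set" and U :: "'w \<Rightarrow> real set"
  assumes "finite W" "E \<subseteq> (\<Union>w\<in>W. U w)" "\<And>w. w \<in> W \<Longrightarrow> bounded (U w)"
    "\<And>w. w \<in> W \<Longrightarrow> diameter (U w) \<le> \<delta>" "0 \<le> \<delta>" "s > 0"
  shows "hausdorff_pre s \<delta> E \<le> ennreal (\<Sum>w\<in>W. diameter (U w) powr s)"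
proof -
  obtain ws where ws: "set ws = W" "distinct ws" using finite_distinct_list[OF assms(1)] by blast
  define V where "V i = (if i < length ws then U (ws ! i) else {})" for i
  have "E \<subseteq> (\<Union>i. V i)"
  proof
    fix x assume "x \<in> E"
    then obtain w where w: "w \<in> W" "x \<in> U w" using assms(2) by blast
    then obtain i where "i < length ws" "ws ! i = w" using ws by (metis in_set_conv_nth)
    then show "x \<in> (\<Union>i. V i)" using w by (auto simp: V_def)
  qed
  moreover have "\<And>i. bounded (V i)" using assms(3) ws by (auto simp: V_def)
  moreover have "\<And>i. diameter (V i) \<le> \<delta>" using assms(4,5) ws by (auto simp: V_def)
  ultimately have "hausdorff_pre s \<delta> E \<le> (\<Sum>i. hterm s (V i))" by (rule hp_le)
  also have "(\<Sum>i. hterm s (V i)) = (\<Sum>i<length ws. hterm s (V i))"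
    by (rule suminf_finite) (auto simp: V_def hterm_def)
  also have "\<dots> \<le> (\<Sum>i<length ws. ennreal (diameter (U (ws ! i)) powr s))"
    by (rule sum_mono) (use assms(6) in \<open>auto simp: V_def hterm_def diam_pow_def\<close>)
  also have "\<dots> = ennreal (\<Sum>i<length ws. diameter (U (ws ! i)) powr s)"
    by (rule sum_ennreal) simp
  also have "(\<Sum>i<length ws. diameter (U (ws ! i)) powr s) = (\<Sum>w\<in>W. diameter (U w) powr s)"
    using sum.reindex_bij_betw[OF bij_betw_nth[OF ws(2) refl refl], of "\<lambda>w. diameter (U w) powr s"] ws(1)
    by simp
  finally show ?thesis .
qed

lemma hp_union:
  fixes A :: "nat \<Rightarrow> real set"
  assumes "\<And>N. hausdorff_pre s \<delta> (A N) = 0"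
  shows "hausdorff_pre s \<delta> (\<Union>N. A N) = 0"
proof -
  have "hausdorff_pre s \<delta> (\<Union>N. A N) \<le> 0 + ennreal e" if e: "e > 0" for e
  proof -
    have "\<forall>N. \<exists>U. A N \<subseteq> (\<Union>i. U i) \<and> (\<forall>i. bounded (U i) \<and> diameter (U i) \<le> \<delta>) \<and>
            (\<Sum>i. hterm s (U i)) < ennreal (e / 2 ^ Suc N)"
    proof
      fix N
      have "hausdorff_pre s \<delta> (A N) < ennreal (e / 2 ^ Suc N)" using assms e by simp
      then show "\<exists>U. A N \<subseteq> (\<Union>i. U i) \<and> (\<forall>i. bounded (U i) \<and> diameter (U i) \<le> \<delta>) \<and>
            (\<Sum>i. hterm s (U i)) < ennreal (e / 2 ^ Suc N)"
        unfolding hausdorff_pre_def hterm_def INF_less_iff by auto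
    qed
    then obtain U where U: "\<And>N. A N \<subseteq> (\<Union>i. U N i)" "\<And>N i. bounded (U N i)"
       "\<And>N i. diameter (U N i) \<le> \<delta>" "\<And>N. (\<Sum>i. hterm s (U N i)) < ennreal (e / 2 ^ Suc N)"
      by metis
    define V where "V i = (case prod_decode i of (N, j) \<Rightarrow> U N j)" for i
    have "(\<Union>N. A N) \<subseteq> (\<Union>i. V i)"
    proof
      fix x assume "x \<in> (\<Union>N. A N)"
      then obtain N j where "x \<in> U N j" using U(1) by blast
      then show "x \<in> (\<Union>i. V i)" unfolding V_def
        by (intro UN_I[of "prod_encode (N, j)"]) auto
    qed
    moreover have "\<And>i. bounded (V i)" "\<And>i. diameter (V i) \<le> \<delta>"
      using U(2,3) by (auto simp: V_def split: prod.splits)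
    ultimately have "hausdorff_pre s \<delta> (\<Union>N. A N) \<le> (\<Sum>i. hterm s (V i))" by (rule hp_le)
    also have "(\<Sum>i. hterm s (V i)) = (\<Sum>N. \<Sum>j. hterm s (U N j))"
    proof -
      have "(\<Sum>i. (\<lambda>(N,j). hterm s (U N j)) (prod_decode i)) = (\<Sum>N. \<Sum>j. hterm s (U N j))"
        by (rule suminf_ennreal_2dimen) simp
      moreover have "(\<lambda>i. hterm s (V i)) = (\<lambda>i. (\<lambda>(N,j). hterm s (U N j)) (prod_decode i))"
        by (auto simp: V_def split: prod.splits)
      ultimately show ?thesis by simp
    qed
    also have "\<dots> \<le> (\<Sum>N. ennreal (e / 2 ^ Suc N))"
      by (intro suminf_le less_imp_le U(4)) auto
    also have "\<dots> = ennreal e"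
    proof -
      have "(\<lambda>N. e / 2 ^ Suc N) sums e"
        using power_half_series sums_mult[of "\<lambda>n. (1/2::real)^Suc n" 1 e]
        by (simp add: field_simps)
      moreover have "\<And>N. 0 \<le> e / 2 ^ Suc N" using e by simp
      ultimately show ?thesis by (intro suminf_ennreal_eq)
    qed
    finally show ?thesis by simp
  qed
  then have "hausdorff_pre s \<delta> (\<Union>N. A N) \<le> 0" by (rule ennreal_le_epsilon) auto
  then show ?thesis by simp
qed



definition irr :: "real set" where "irr = {0<..<1} - \<rat>"

lemma gauss_irr:
  assumes "x \<in> irr" shows "gauss_map x \<in> irr"
proof -
  have x: "0 < x" "x < 1" "x \<notin> \<rat>" using assms by (auto simp: irr_def)
  have "1 / x \<notin> \<rat>" using x(3) by (metis Rats_divide Rats_1 div_by_1 divide_divide_eq_right mult_1)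
  have q: "frac (1/x) \<notin> \<rat>"
  proof
    assume "frac (1/x) \<in> \<rat>"
    hence "frac (1/x) + of_int \<lfloor>1/x\<rfloor> \<in> \<rat>" by (intro Rats_add) auto
    thus False using \<open>1/x \<notin> \<rat>\<close> by (simp add: frac_def)
  qed
  hence "frac (1/x) \<noteq> 0" by (metis Rats_0)
  moreover have "0 \<le> frac (1/x)" "frac (1/x) < 1" by (auto simp: frac_lt_1)
  ultimately show ?thesis using q by (auto simp: irr_def gauss_map_def)
qed

lemma gauss_iter_irr: "x \<in> irr \<Longrightarrow> (gauss_map ^^ n) x \<in> irr"
  by (induction n) (auto intro: gauss_irr)

lemma gauss_decomp:
  assumes "x \<in> irr" shows "x = 1 / (real (cf_quot x 1) + gauss_map x)" and "cf_quot x 1 \<ge> 1"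
proof -
  have x: "0 < x" "x < 1" using assms by (auto simp: irr_def)
  have "1 < 1/x" using x by simp
  hence f: "\<lfloor>1/x\<rfloor> \<ge> 1" by (simp add: le_floor_iff)
  thus "cf_quot x 1 \<ge> 1" unfolding cf_quot_def by (metis funpow_0 diff_self_eq_0 nat_mono nat_one_as_int)
  have f0: "0 \<le> \<lfloor>1/x\<rfloor>" using f by linarith
  have "real (cf_quot x 1) = of_int \<lfloor>1/x\<rfloor>" unfolding cf_quot_def
    using of_nat_nat[OF f0] by simp
  hence "real (cf_quot x 1) + gauss_map x = 1/x" by (simp add: gauss_map_def frac_def)
  thus "x = 1 / (real (cf_quot x 1) + gauss_map x)" by simp
qed

lemma cf_quot_Suc: "k \<ge> 1 \<Longrightarrow> cf_quot x (Suc k) = cf_quot (gauss_map x) k"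
proof -
  assume "k \<ge> 1"
  then obtain j where "k = Suc j" by (cases k) auto
  thus ?thesis by (simp add: cf_quot_def funpow_Suc_right del: funpow.simps)
qed

lemma cf_quot_ge1: assumes "x \<in> irr" "k \<ge> 1" shows "cf_quot x k \<ge> 1"
proof -
  have "cf_quot x k = cf_quot ((gauss_map ^^ (k-1)) x) 1"
    using assms(2) by (simp add: cf_quot_def)
  thus ?thesis using gauss_decomp(2)[OF gauss_iter_irr[OF assms(1)]] by simp
qed

fun phi :: "nat list \<Rightarrow> real \<Rightarrow> real" where
  "phi [] y = y"
| "phi (a # w) y = 1 / (real a + phi w y)"

definition wd :: "real \<Rightarrow> nat \<Rightarrow> nat list" where
  "wd x n = map (cf_quot x) [1..<Suc n]"

lemma wd_Suc: "wd x (Suc n) = cf_quot x 1 # wd (gauss_map x) n"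
proof -
  have "[1..<Suc (Suc n)] = 1 # map Suc [1..<Suc n]"
    by (simp add: upt_conv_Cons map_Suc_upt del: upt_Suc)
  thus ?thesis unfolding wd_def by (simp add: cf_quot_Suc del: upt_Suc)
qed

lemma wd_phi: "x \<in> irr \<Longrightarrow> x = phi (wd x n) ((gauss_map ^^ n) x)"
proof (induction n arbitrary: x)
  case 0 thus ?case by (simp add: wd_def)
next
  case (Suc n)
  have "phi (wd x (Suc n)) ((gauss_map ^^ Suc n) x) =
        1 / (real (cf_quot x 1) + phi (wd (gauss_map x) n) ((gauss_map ^^ n) (gauss_map x)))"
    by (simp add: wd_Suc funpow_Suc_right del: funpow.simps)
  also have "\<dots> = x" using Suc.IH[OF gauss_irr[OF Suc.prems]] gauss_decomp(1)[OF Suc.prems] by simp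
  finally show ?case by simp
qed

definition Pw :: "nat list \<Rightarrow> real" where "Pw w = prod_list (map real w)"

lemma Pw_simps[simp]: "Pw [] = 1" "Pw (a # w) = real a * Pw w"
  by (auto simp: Pw_def)

lemma Pw_ge1: "\<forall>a\<in>set w. a \<ge> 1 \<Longrightarrow> Pw w \<ge> 1"
  by (induction w) (auto simp: Pw_def intro: order.trans[OF _ mult_mono, of 1 1 1])

lemma phi_range: "\<forall>a\<in>set w. a \<ge> 1 \<Longrightarrow> y \<in> {0..1} \<Longrightarrow> phi w y \<in> {0..1}"
proof (induction w)
  case Nil thus ?case by simp
next
  case (Cons a w)
  hence "phi w y \<ge> 0" "real a \<ge> 1" by auto
  thus ?case by auto
qed

lemma phi_lip:
  assumes "\<forall>a\<in>set w. a \<ge> 1" "y \<in> {0..1}" "z \<in> {0..1}"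
  shows "\<bar>phi w y - phi w z\<bar> \<le> \<bar>y - z\<bar> / (Pw w)^2"
  using assms(1)
proof (induction w)
  case Nil thus ?case by simp
next
  case (Cons a w)
  define u where "u = phi w y"
  define v where "v = phi w z"
  have uv: "u \<ge> 0" "v \<ge> 0" using phi_range[of w] Cons.prems assms(2,3) by (auto simp: u_def v_def)
  have a: "real a \<ge> 1" using Cons.prems by auto
  have P: "Pw w \<ge> 1" using Pw_ge1 Cons.prems by auto
  have IH: "\<bar>u - v\<bar> \<le> \<bar>y - z\<bar> / (Pw w)^2" using Cons by (simp add: u_def v_def)
  have "1/(a+u) - 1/(a+v) = (v - u) / ((a+u)*(a+v))"
    using uv a by (simp add: field_simps)
  hence "\<bar>1/(a+u) - 1/(a+v)\<bar> = \<bar>u - v\<bar> / ((a+u)*(a+v))"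
    using uv a by (simp add: abs_minus_commute)
  also have "\<dots> \<le> \<bar>u - v\<bar> / (real a * real a)"
    using uv a by (intro divide_left_mono mult_mono) auto
  also have "\<dots> \<le> (\<bar>y - z\<bar> / (Pw w)^2) / (real a * real a)"
    using IH a by (intro divide_right_mono) auto
  also have "\<dots> = \<bar>y - z\<bar> / (Pw (a # w))^2"
    by (simp add: power2_eq_square field_simps)
  finally show ?case by (simp add: u_def v_def)
qed

definition J :: "nat list \<Rightarrow> real set" where "J w = phi w ` {0..1}"

lemma J_bounded: "\<forall>a\<in>set w. a \<ge> 1 \<Longrightarrow> bounded (J w)"
  unfolding J_def by (rule bounded_subset[of "{0..1}"]) (use phi_range in auto)

lemma J_diam: assumes "\<forall>a\<in>set w. a \<ge> 1" shows "diameter (J w) \<le> 1 / (Pw w)^2"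
proof (rule diameter_le)
  show "J w \<noteq> {} \<or> 0 \<le> 1 / (Pw w)^2" by simp
  fix p q assume "p \<in> J w" "q \<in> J w"
  then obtain y z where "y \<in> {0..1}" "z \<in> {0..1}" "p = phi w y" "q = phi w z" by (auto simp: J_def)
  hence "norm (p - q) \<le> \<bar>y - z\<bar> / (Pw w)^2" using phi_lip[OF assms] by simp
  also have "\<dots> \<le> 1 / (Pw w)^2" using \<open>y \<in> _\<close> \<open>z \<in> _\<close> by (intro divide_right_mono) auto
  finally show "norm (p - q) \<le> 1 / (Pw w)^2" .
qed

lemma in_J: assumes "x \<in> irr" shows "x \<in> J (wd x n)"
proof -
  have "(gauss_map ^^ n) x \<in> {0..1}" using gauss_iter_irr[OF assms, of n] by (auto simp: irr_def)
  thus ?thesis using wd_phi[OF assms, of n] unfolding J_def by blast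
qed

lemma wd_ge1: "x \<in> irr \<Longrightarrow> \<forall>a\<in>set (wd x n). a \<ge> 1"
  unfolding wd_def using cf_quot_ge1[of x] by force

lemma ln_Pw: "\<forall>a\<in>set w. a \<ge> 1 \<Longrightarrow> ln (Pw w) = sum_list (map (\<lambda>a. ln (real a)) w)"
proof (induction w)
  case Nil thus ?case by simp
next
  case (Cons a w)
  hence "Pw w \<ge> 1" "real a \<ge> 1" using Pw_ge1 by auto
  thus ?case using Cons by (simp add: ln_mult)
qed

lemma ln_Pw_wd: "x \<in> irr \<Longrightarrow> ln (Pw (wd x n)) = (\<Sum>k=1..n. ln (real (cf_quot x k)))"
proof -
  assume x: "x \<in> irr"
  have "ln (Pw (wd x n)) = sum_list (map (\<lambda>k. ln (real (cf_quot x k))) [1..<Suc n])"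
    using ln_Pw[OF wd_ge1[OF x]] by (simp add: wd_def o_def)
  also have "\<dots> = (\<Sum>k\<in>set [1..<Suc n]. ln (real (cf_quot x k)))"
    by (rule sum_set_upt_conv_sum_list_nat[symmetric])
  also have "set [1..<Suc n] = {1..n}" by auto
  finally show ?thesis .
qed

lemma Pw_powr: "\<forall>a\<in>set w. a \<ge> 1 \<Longrightarrow> prod_list (map (\<lambda>a. real a powr c) w) = Pw w powr c"
proof (induction w)
  case Nil thus ?case by simp
next
  case (Cons a w)
  hence "Pw w \<ge> 1" "real a \<ge> 1" using Pw_ge1 by auto
  thus ?case using Cons by (simp add: powr_mult)
qed

definition Wn :: "nat \<Rightarrow> nat \<Rightarrow> nat list set" where
  "Wn B n = {w. set w \<subseteq> {1..B} \<and> length w = n}"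

lemma Wn_finite: "finite (Wn B n)"
  unfolding Wn_def by (rule finite_lists_length_eq) simp

lemma Wn_sum: "(\<Sum>w\<in>Wn B n. prod_list (map f w)) = (\<Sum>a\<in>{1..B}. f a :: real) ^ n"
proof (induction n)
  case 0
  have "Wn B 0 = {[]}" by (auto simp: Wn_def)
  thus ?case by simp
next
  case (Suc n)
  have eq: "Wn B (Suc n) = (\<lambda>(a,w). a # w) ` ({1..B} \<times> Wn B n)"
  proof
    show "Wn B (Suc n) \<subseteq> (\<lambda>(a,w). a # w) ` ({1..B} \<times> Wn B n)"
    proof
      fix w assume "w \<in> Wn B (Suc n)"
      then obtain a v where "w = a # v" "a \<in> {1..B}" "v \<in> Wn B n"
        by (cases w) (auto simp: Wn_def)
      thus "w \<in> (\<lambda>(a,w). a # w) ` ({1..B} \<times> Wn B n)" by force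
    qed
  qed (auto simp: Wn_def)
  have inj: "inj_on (\<lambda>(a,w). a # w) ({1..B} \<times> Wn B n)" by (auto simp: inj_on_def)
  have "(\<Sum>w\<in>Wn B (Suc n). prod_list (map f w)) = (\<Sum>(a,w)\<in>{1..B} \<times> Wn B n. f a * prod_list (map f w))"
    unfolding eq by (subst sum.reindex[OF inj]) (simp add: case_prod_beta)
  also have "\<dots> = (\<Sum>a\<in>{1..B}. f a) * (\<Sum>w\<in>Wn B n. prod_list (map f w))"
    by (simp add: sum_product sum.cartesian_product)
  finally show ?case using Suc by simp
qed

lemma cf_max_Suc:
  assumes "j \<ge> 1" shows "cf_max (Suc j) x = max (cf_max j x) (cf_quot x (Suc j))"
proof -
  have "{1..Suc j} = insert (Suc j) {1..j}" by auto
  hence "cf_max (Suc j) x = Max (insert (cf_quot x (Suc j)) (cf_quot x ` {1..j}))"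
    by (simp add: cf_max_def)
  also have "\<dots> = max (cf_quot x (Suc j)) (Max (cf_quot x ` {1..j}))"
    using assms by (intro Max_insert) auto
  finally show ?thesis by (simp add: cf_max_def max.commute)
qed

lemma cf_max_ge: "1 \<le> k \<Longrightarrow> k \<le> n \<Longrightarrow> cf_quot x k \<le> cf_max n x"
  unfolding cf_max_def by (rule Max_ge) auto

lemma cf_max_ge1: "x \<in> irr \<Longrightarrow> n \<ge> 1 \<Longrightarrow> cf_max n x \<ge> 1"
  using cf_max_ge[of 1 n x] cf_quot_ge1[of x 1] by auto



definition good :: "real \<Rightarrow> nat \<Rightarrow> real \<Rightarrow> bool" where
  "good \<epsilon> N x \<longleftrightarrow> x \<in> irr \<and> (\<forall>k\<ge>N. exp (sqrt k - \<epsilon>) \<le> real (cf_max k x) \<and> real (cf_max k x) \<le> exp (sqrt k + \<epsilon>))"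

lemma sqrt_step: assumes "\<epsilon> > 0" "1 / \<epsilon>^2 \<le> real j" shows "sqrt (real (Suc j)) - sqrt j \<le> \<epsilon>"
proof -
  have "1/\<epsilon>^2 > 0" using assms by simp
  hence j: "real j > 0" using assms by linarith
  have "1/\<epsilon> \<le> sqrt j" using assms by (intro real_le_rsqrt) (simp add: power_divide)
  have "(sqrt (Suc j) - sqrt j) * (sqrt (Suc j) + sqrt j) = 1"
    by (simp add: algebra_simps)
  moreover have "sqrt (Suc j) + sqrt j \<ge> 1/\<epsilon>" using \<open>1/\<epsilon> \<le> sqrt j\<close> real_sqrt_ge_zero[of "real (Suc j)"] by linarith
  moreover have "sqrt (Suc j) - sqrt j \<ge> 0" by simp
  ultimately have "(sqrt (Suc j) - sqrt j) * (1/\<epsilon>) \<le> 1"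
    using mult_left_mono[of "1/\<epsilon>" "sqrt (Suc j) + sqrt j" "sqrt (Suc j) - sqrt j"] by (simp add: mult.commute)
  thus ?thesis using assms(1) by (simp add: field_simps)
qed

lemma step_ineq:
  assumes g: "good \<epsilon> N x" and e: "\<epsilon> > 0" and N: "N \<ge> 1" "1 / \<epsilon>^2 \<le> real N" and j: "j \<ge> N"
  shows "(ln (cf_max (Suc j) x))^2 - (ln (cf_max j x))^2 \<le> 6 * \<epsilon> * ln (cf_quot x (Suc j))"
proof -
  have x: "x \<in> irr" using g by (simp add: good_def)
  have gg: "\<forall>k\<ge>N. exp (sqrt k - \<epsilon>) \<le> real (cf_max k x) \<and> real (cf_max k x) \<le> exp (sqrt k + \<epsilon>)"
    using g by (simp add: good_def)
  have b1: "exp (sqrt j - \<epsilon>) \<le> real (cf_max j x)" "real (cf_max (Suc j) x) \<le> exp (sqrt (Suc j) + \<epsilon>)"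
    using gg[rule_format, of j] gg[rule_format, of "Suc j"] j by auto
  have T1: "real (cf_max j x) \<ge> 1" "real (cf_max (Suc j) x) \<ge> 1" using cf_max_ge1[OF x] j N by auto
  have a1: "real (cf_quot x (Suc j)) \<ge> 1" using cf_quot_ge1[OF x, of "Suc j"] by simp
  have mx: "cf_max (Suc j) x = max (cf_max j x) (cf_quot x (Suc j))" using cf_max_Suc j N by auto
  show ?thesis
  proof (cases "cf_max (Suc j) x = cf_max j x")
    case True thus ?thesis using a1 e by simp
  next
    case False
    hence eq: "cf_max (Suc j) x = cf_quot x (Suc j)" and lt: "cf_max j x < cf_max (Suc j) x"
      using mx by (auto simp: max_def split: if_splits)
    define u where "u = ln (real (cf_max (Suc j) x))"
    define v where "v = ln (real (cf_max j x))"
    have v0: "0 \<le> v" "v \<le> u" using T1 lt by (auto simp: u_def v_def)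
    have "v \<ge> sqrt j - \<epsilon>" using b1(1) T1 unfolding v_def by (subst ln_ge_iff) auto
    moreover have "u \<le> sqrt (Suc j) + \<epsilon>" using ln_mono[OF b1(2)] T1 unfolding u_def by simp
    moreover have "sqrt (Suc j) - sqrt j \<le> \<epsilon>" using sqrt_step[OF e] N j by (meson le_trans of_nat_mono order_trans)
    ultimately have d: "u - v \<le> 3 * \<epsilon>" by linarith
    have "u^2 - v^2 = (u - v) * (u + v)" by (simp add: power2_eq_square algebra_simps)
    also have "\<dots> \<le> (3 * \<epsilon>) * (2 * u)" using d v0 by (intro mult_mono) auto
    finally have "u^2 - v^2 \<le> 6 * \<epsilon> * u" by simp
    thus ?thesis using eq by (simp add: u_def v_def)
  qed
qed

lemma tele:
  assumes g: "good \<epsilon> N x" and e: "\<epsilon> > 0" and N: "N \<ge> 1" "1 / \<epsilon>^2 \<le> real N" and n: "n \<ge> N"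
  shows "(ln (cf_max n x))^2 - (ln (cf_max N x))^2 \<le> 6 * \<epsilon> * (\<Sum>k=Suc N..n. ln (cf_quot x k))"
  using n
proof (induction n rule: dec_induct)
  case base thus ?case by simp
next
  case (step n)
  have "(\<Sum>k=Suc N..Suc n. ln (real (cf_quot x k))) = ln (cf_quot x (Suc n)) + (\<Sum>k=Suc N..n. ln (cf_quot x k))"
    using step.hyps by (simp add: sum.nat_ivl_Suc')
  thus ?case using step.IH step_ineq[OF g e N step.hyps(1)] by (simp add: algebra_simps)
qed

lemma growth:
  assumes g: "good \<epsilon> N x" and e: "\<epsilon> > 0" and N: "N \<ge> 1" "1 / \<epsilon>^2 \<le> real N" and n: "n \<ge> N"
    and n2: "16 * \<epsilon>^2 \<le> real n"
  shows "(real n / 2 - (sqrt N + \<epsilon>)^2) / (6 * \<epsilon>) \<le> (\<Sum>k=1..n. ln (cf_quot x k))"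
proof -
  have x: "x \<in> irr" using g by (simp add: good_def)
  have gg: "\<forall>k\<ge>N. exp (sqrt k - \<epsilon>) \<le> real (cf_max k x) \<and> real (cf_max k x) \<le> exp (sqrt k + \<epsilon>)"
    using g by (simp add: good_def)
  have bN: "real (cf_max N x) \<le> exp (sqrt N + \<epsilon>)" and bn: "exp (sqrt n - \<epsilon>) \<le> real (cf_max n x)"
    using gg[rule_format, of N] gg[rule_format, of n] n by auto
  have T1: "real (cf_max N x) \<ge> 1" "real (cf_max n x) \<ge> 1" using cf_max_ge1[OF x] n N by auto
  have sn: "4 * \<epsilon> \<le> sqrt n"
    using n2 by (intro real_le_rsqrt) (simp add: power_mult_distrib)
  have lN: "0 \<le> ln (cf_max N x)" "ln (cf_max N x) \<le> sqrt N + \<epsilon>"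
    using ln_mono[OF bN] T1 by auto
  have ln: "sqrt n - \<epsilon> \<le> ln (cf_max n x)"
    using bn T1 by (subst ln_ge_iff) auto
  have "(ln (cf_max N x))^2 \<le> (sqrt N + \<epsilon>)^2" using lN by (intro power_mono) auto
  moreover have "(sqrt n - \<epsilon>)^2 \<le> (ln (cf_max n x))^2" using ln sn e by (intro power_mono) auto
  moreover have "real n / 2 \<le> (sqrt n - \<epsilon>)^2"
  proof -
    have "(sqrt n - \<epsilon>)^2 = real n - 2 * \<epsilon> * sqrt n + \<epsilon>^2" by (simp add: power2_eq_square algebra_simps)
    moreover have "4 * \<epsilon> * sqrt n \<le> sqrt n * sqrt n" using sn by (intro mult_right_mono) auto
    moreover have "sqrt n * sqrt n = real n" by simp
    moreover have "\<epsilon>^2 \<ge> 0" by simp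
    ultimately show ?thesis by linarith
  qed
  ultimately have "real n / 2 - (sqrt N + \<epsilon>)^2 \<le> 6 * \<epsilon> * (\<Sum>k=Suc N..n. ln (cf_quot x k))"
    using tele[OF assms(1-5)] by linarith
  hence "(real n / 2 - (sqrt N + \<epsilon>)^2) / (6 * \<epsilon>) \<le> (\<Sum>k=Suc N..n. ln (cf_quot x k))"
    using e by (simp add: field_simps)
  also have "\<dots> \<le> (\<Sum>k=1..n. ln (cf_quot x k))"
    using N cf_quot_ge1[OF x] by (intro sum_mono2) auto
  finally show ?thesis .
qed



definition ZZ :: "real \<Rightarrow> real" where "ZZ s = (\<Sum>a. real (Suc a) powr (-(s + 1/2)))"
definition KK :: "real \<Rightarrow> real" where "KK s = ln (ZZ s)"
definition eps :: "real \<Rightarrow> real" where "eps s = (s - 1/2) / (12 * (KK s + 1))"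

lemma ZZ_summable: "s > 1/2 \<Longrightarrow> summable (\<lambda>a. real (Suc a) powr (-(s + 1/2)))"
  using summable_real_powr_iff[of "-(s+1/2)"] summable_Suc_iff[of "\<lambda>a. real a powr (-(s + 1/2))"]
  by simp

lemma ZZ_ge: assumes "s > 1/2" shows "ZZ s \<ge> 1" "(\<Sum>a\<in>{1..B}. real a powr (-(s + 1/2))) \<le> ZZ s"
proof -
  have "(\<Sum>a\<in>{..<1}. real (Suc a) powr (-(s + 1/2))) \<le> ZZ s"
    unfolding ZZ_def by (rule sum_le_suminf[OF ZZ_summable[OF assms]]) auto
  thus "ZZ s \<ge> 1" by simp
  have "(\<Sum>a\<in>{1..B}. real a powr (-(s + 1/2))) = (\<Sum>a\<in>{..<B}. real (Suc a) powr (-(s + 1/2)))"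
  proof -
    have "{1..B} = Suc ` {..<B}" by (auto simp: image_iff) (metis Suc_pred lessThan_iff le_simps(3) less_Suc_eq_le not_one_le_zero)
    thus ?thesis by (simp add: sum.reindex)
  qed
  also have "\<dots> \<le> ZZ s"
    unfolding ZZ_def by (rule sum_le_suminf[OF ZZ_summable[OF assms]]) auto
  finally show "(\<Sum>a\<in>{1..B}. real a powr (-(s + 1/2))) \<le> ZZ s" .
qed

lemma KK_ge: "s > 1/2 \<Longrightarrow> KK s \<ge> 0"
  using ZZ_ge(1) by (simp add: KK_def)

lemma eps_pos: "s > 1/2 \<Longrightarrow> eps s > 0"
  using KK_ge[of s] by (simp add: eps_def)

lemma piece_null:
  assumes s: "s > 1/2" and N: "N \<ge> 1" "1 / (eps s)^2 \<le> real N" and \<delta>: "\<delta> > 0"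
  shows "hausdorff_pre s \<delta> {x. good (eps s) N x} = 0"
proof -
  define \<epsilon> where "\<epsilon> = eps s"
  define K where "K = KK s"
  define Z where "Z = ZZ s"
  define t where "t = s - 1/2"
  define r where "r = s + 1/2"
  have e: "\<epsilon> > 0" using eps_pos[OF s] by (simp add: \<epsilon>_def)
  have K0: "K \<ge> 0" using KK_ge[OF s] by (simp add: K_def)
  have Z1: "Z \<ge> 1" using ZZ_ge(1)[OF s] by (simp add: Z_def)
  have ZK: "Z = exp K" using Z1 by (simp add: K_def Z_def KK_def)
  have t: "t = 12 * (K + 1) * \<epsilon>" using K0 by (simp add: \<epsilon>_def eps_def K_def t_def)
  have tpos: "t > 0" using s by (simp add: t_def)
  define C where "C = (sqrt N + \<epsilon>)^2"
  have "hausdorff_pre s \<delta> {x. good \<epsilon> N x} \<le> 0 + ennreal e'" if e': "e' > 0" for e'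
  proof -
    obtain n :: nat where n: "real n \<ge> real N + 16 * \<epsilon>^2 + \<bar>2 * C - 6 * \<epsilon> * ln \<delta>\<bar> + \<bar>2 * C * (K + 1) - ln e'\<bar>"
      using real_arch_simple by blast
    have nN: "n \<ge> N" and n16: "16 * \<epsilon>^2 \<le> real n" and nd: "2 * C - 6 * \<epsilon> * ln \<delta> \<le> real n"
      and ne: "2 * C * (K + 1) - ln e' \<le> real n"
    proof -
      have "\<epsilon>^2 \<ge> 0" by simp
      note ab = abs_ge_self[of "2 * C - 6 * \<epsilon> * ln \<delta>"] abs_ge_self[of "2 * C * (K + 1) - ln e'"]
        abs_ge_zero[of "2 * C - 6 * \<epsilon> * ln \<delta>"] abs_ge_zero[of "2 * C * (K + 1) - ln e'"]
      have "real N \<le> real n" using n ab \<open>\<epsilon>^2 \<ge> 0\<close> by linarith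
      thus "n \<ge> N" by simp
      show "16 * \<epsilon>^2 \<le> real n" "2 * C - 6 * \<epsilon> * ln \<delta> \<le> real n" "2 * C * (K + 1) - ln e' \<le> real n"
        using n ab \<open>\<epsilon>^2 \<ge> 0\<close> by linarith+
    qed
    define D where "D = (real n / 2 - C) / (6 * \<epsilon>)"
    define B where "B = nat \<lfloor>exp (sqrt n + \<epsilon>)\<rfloor>"
    define W where "W = {w \<in> Wn B n. exp D \<le> Pw w}"
    have D\<delta>: "exp (- 2 * D) \<le> \<delta>"
    proof -
      have "- 2 * D \<le> ln \<delta>" using nd e by (simp add: D_def field_simps)
      thus ?thesis using \<delta> by (metis exp_le_cancel_iff exp_ln)
    qed
    have tD: "t * D = (K + 1) * (real n - 2 * C)" using e by (simp add: t D_def field_simps)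
    have cover: "{x. good \<epsilon> N x} \<subseteq> (\<Union>w\<in>W. J w)"
    proof
      fix x assume "x \<in> {x. good \<epsilon> N x}"
      hence g: "good \<epsilon> N x" by simp
      hence x: "x \<in> irr" by (simp add: good_def)
      have Tn: "real (cf_max n x) \<le> exp (sqrt n + \<epsilon>)" using g nN by (auto simp: good_def)
      have "set (wd x n) \<subseteq> {1..B}"
      proof
        fix a assume "a \<in> set (wd x n)"
        hence "a \<in> cf_quot x ` {1..n}" unfolding wd_def
          by (metis atLeastLessThanSuc_atLeastAtMost list.set_map set_upt)
        then obtain k where k: "k \<in> {1..n}" "a = cf_quot x k" by blast
        have "real a \<le> exp (sqrt n + \<epsilon>)" using cf_max_ge[of k n x] k Tn
          by (meson atLeastAtMost_iff of_nat_le_iff order_trans)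
        hence "a \<le> B" unfolding B_def by (rule le_nat_floor)
        moreover have "a \<ge> 1" using cf_quot_ge1[OF x] k by auto
        ultimately show "a \<in> {1..B}" by simp
      qed
      hence "wd x n \<in> Wn B n" by (simp add: Wn_def wd_def)
      moreover have "exp D \<le> Pw (wd x n)"
      proof -
        have "D \<le> ln (Pw (wd x n))"
          unfolding ln_Pw_wd[OF x] D_def C_def \<epsilon>_def
          using growth[OF g[unfolded \<epsilon>_def] eps_pos[OF s] N nN n16[unfolded \<epsilon>_def]] by simp
        moreover have "Pw (wd x n) > 0" using Pw_ge1[OF wd_ge1[OF x, of n]] by simp
        ultimately show ?thesis by (metis exp_le_cancel_iff exp_ln)
      qed
      ultimately have "wd x n \<in> W" by (simp add: W_def)
      thus "x \<in> (\<Union>w\<in>W. J w)" using in_J[OF x] by blast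
    qed
    have wprops: "\<forall>a\<in>set w. a \<ge> 1" "Pw w \<ge> exp D" "Pw w \<ge> 1" if "w \<in> W" for w
    proof -
      show a: "\<forall>a\<in>set w. a \<ge> 1" using that by (auto simp: W_def Wn_def)
      show "Pw w \<ge> exp D" using that by (simp add: W_def)
      show "Pw w \<ge> 1" using Pw_ge1[OF a] .
    qed
    have diamW: "diameter (J w) \<le> exp (- 2 * D)" if "w \<in> W" for w
    proof -
      have "diameter (J w) \<le> 1 / (Pw w)^2" using J_diam wprops(1)[OF that] by blast
      also have "\<dots> \<le> 1 / (exp D)^2" using wprops(2,3)[OF that]
        by (intro divide_left_mono power_mono) (auto intro!: mult_pos_pos)
      also have "\<dots> = exp (- 2 * D)" by (simp add: exp_minus field_simps flip: exp_double)
      finally show ?thesis .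
    qed
    have "hausdorff_pre s \<delta> {x. good \<epsilon> N x} \<le> ennreal (\<Sum>w\<in>W. diameter (J w) powr s)"
      using s \<delta> D\<delta> diamW J_bounded wprops(1)
      by (intro hp_finite[OF _ cover]) (auto simp: W_def Wn_finite intro: order.trans)
    also have "(\<Sum>w\<in>W. diameter (J w) powr s) \<le> (\<Sum>w\<in>W. prod_list (map (\<lambda>a. real a powr (-r)) w) / exp (t * D))"
    proof (rule sum_mono)
      fix w assume w: "w \<in> W"
      define P where "P = Pw w"
      have P1: "P \<ge> 1" "P \<ge> exp D" using wprops[OF w] by (auto simp: P_def)
      have "diameter (J w) powr s \<le> (1 / P^2) powr s"
        using J_diam[OF wprops(1)[OF w]] s diameter_ge_0[OF J_bounded[OF wprops(1)[OF w]]]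
        by (intro powr_mono2) (auto simp: P_def)
      also have "(1 / P^2) powr s = P powr (-2 * s)"
      proof -
        have "1 / P^2 = P powr (-2)" using P1 by (simp add: powr_minus_divide powr_numeral)
        thus ?thesis by (simp add: powr_powr)
      qed
      also have "\<dots> \<le> P powr (-2 * s) * (P powr t / exp (t * D))"
      proof -
        have "exp (t * D) = exp D powr t" by (simp add: exp_powr_real mult.commute)
        also have "\<dots> \<le> P powr t" using P1 tpos by (intro powr_mono2) auto
        finally have m: "1 \<le> P powr t / exp (t * D)" by simp
        have "P powr (-2 * s) * 1 \<le> P powr (-2 * s) * (P powr t / exp (t * D))"
          by (rule mult_left_mono[OF m]) simp
        thus ?thesis by simp
      qed
      also have "\<dots> = P powr (-r) / exp (t * D)"
        by (simp add: t_def r_def flip: powr_add)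
      also have "\<dots> = prod_list (map (\<lambda>a. real a powr (-r)) w) / exp (t * D)"
        using Pw_powr[OF wprops(1)[OF w]] by (simp add: P_def)
      finally show "diameter (J w) powr s \<le> prod_list (map (\<lambda>a. real a powr (-r)) w) / exp (t * D)" .
    qed
    also have "\<dots> \<le> (\<Sum>w\<in>Wn B n. prod_list (map (\<lambda>a. real a powr (-r)) w) / exp (t * D))"
      by (intro sum_mono2 Wn_finite) (auto simp: W_def intro!: divide_nonneg_pos prod_list_nonneg)
    also have "\<dots> = (\<Sum>a\<in>{1..B}. real a powr (-r))^n / exp (t * D)"
      by (simp add: Wn_sum flip: sum_divide_distrib)
    also have "\<dots> \<le> Z^n / exp (t * D)"
      using ZZ_ge(2)[OF s, of B] by (intro divide_right_mono power_mono sum_nonneg) (auto simp: Z_def r_def)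
    also have "\<dots> = exp (- real n + 2 * C * (K + 1))"
    proof -
      have "Z^n = exp (real n * K)" unfolding ZK by (rule exp_of_nat_mult[symmetric])
      hence "Z^n / exp (t * D) = exp (real n * K - t * D)" by (simp add: exp_diff)
      also have "real n * K - t * D = - real n + 2 * C * (K + 1)" unfolding tD by (simp add: algebra_simps)
      finally show ?thesis .
    qed
    also have "\<dots> \<le> e'"
    proof -
      have "- real n + 2 * C * (K + 1) \<le> ln e'" using ne by linarith
      hence "exp (- real n + 2 * C * (K + 1)) \<le> exp (ln e')" by simp
      thus ?thesis using e' by simp
    qed
    finally show ?thesis by (simp add: ennreal_leI)
  qed
  hence "hausdorff_pre s \<delta> {x. good \<epsilon> N x} \<le> 0" by (rule ennreal_le_epsilon) auto
  thus ?thesis by (simp add: \<epsilon>_def)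
qed



lemma good_mono: "good \<epsilon> N x \<Longrightarrow> N \<le> N' \<Longrightarrow> good \<epsilon> N' x"
  by (auto simp: good_def)

lemma F_good:
  assumes x: "x \<in> F_half_one" and e: "\<epsilon> > 0"
  shows "\<exists>M. good \<epsilon> M x"
proof -
  have xi: "x \<in> irr" using x by (simp add: F_half_one_def irr_def)
  have lim: "(\<lambda>n. real (cf_max n x) / exp (sqrt (real n))) \<longlonglongrightarrow> 1"
    using x by (simp add: F_half_one_def)
  have "exp (-\<epsilon>) < 1" "1 < exp \<epsilon>" using e by auto
  hence "eventually (\<lambda>n. exp (-\<epsilon>) < real (cf_max n x) / exp (sqrt (real n)) \<and>
                         real (cf_max n x) / exp (sqrt (real n)) < exp \<epsilon>) sequentially"
    using order_tendstoD[OF lim] by (auto intro: eventually_conj)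
  then obtain M where M: "\<And>n. n \<ge> M \<Longrightarrow> exp (-\<epsilon>) < real (cf_max n x) / exp (sqrt (real n)) \<and>
                         real (cf_max n x) / exp (sqrt (real n)) < exp \<epsilon>"
    unfolding eventually_sequentially by blast
  have "good \<epsilon> M x" unfolding good_def
  proof (intro conjI xi allI impI)
    fix k assume "k \<ge> M"
    note Mk = M[OF this]
    have "exp (sqrt k - \<epsilon>) = exp (-\<epsilon>) * exp (sqrt k)" by (simp add: exp_diff exp_minus field_simps)
    also have "\<dots> \<le> real (cf_max k x)" using Mk by (simp add: field_simps)
    finally show "exp (sqrt k - \<epsilon>) \<le> real (cf_max k x)" .
    have "real (cf_max k x) \<le> exp \<epsilon> * exp (sqrt k)" using Mk by (simp add: field_simps)
    also have "\<dots> = exp (sqrt k + \<epsilon>)" by (simp add: exp_add)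
    finally show "real (cf_max k x) \<le> exp (sqrt k + \<epsilon>)" .
  qed
  thus ?thesis by blast
qed

lemma H_zero:
  assumes s: "s > 1/2"
  shows "hausdorff_measure s F_half_one = 0"
proof -
  define K0 where "K0 = nat \<lceil>1 / (eps s)^2\<rceil> + 1"
  have sub: "F_half_one \<subseteq> (\<Union>M. {x. good (eps s) (M + K0) x})"
  proof
    fix x assume "x \<in> F_half_one"
    then obtain M where "good (eps s) M x" using F_good eps_pos[OF s] by blast
    hence "good (eps s) (M + K0) x" by (rule good_mono) simp
    thus "x \<in> (\<Union>M. {x. good (eps s) (M + K0) x})" by blast
  qed
  have "hausdorff_pre s \<delta> F_half_one = 0" if \<delta>: "\<delta> > 0" for \<delta>
  proof -
    have "hausdorff_pre s \<delta> (\<Union>M. {x. good (eps s) (M + K0) x}) = 0"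
    proof (rule hp_union)
      fix M
      have "1 / (eps s)^2 \<le> real K0" unfolding K0_def by linarith
      hence "1 / (eps s)^2 \<le> real (M + K0)" by simp
      moreover have "M + K0 \<ge> 1" by (simp add: K0_def)
      ultimately show "hausdorff_pre s \<delta> {x. good (eps s) (M + K0) x} = 0"
        using piece_null[OF s _ _ \<delta>] by blast
    qed
    hence "hausdorff_pre s \<delta> F_half_one \<le> 0" using hp_mono[OF sub, of s \<delta>] by simp
    thus ?thesis by simp
  qed
  thus ?thesis unfolding hausdorff_measure_def by simp
qed

theorem theorem2:
  shows "hausdorff_dim F_half_one \<le> ereal (1/2)"
proof (rule dense_ge)
  fix y :: ereal assume y: "ereal (1/2) < y"
  show "hausdorff_dim F_half_one \<le> y"
  proof (cases y)
    case (real r)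
    hence r: "r > 1/2" using y by simp
    hence "ereal r \<in> {ereal s | s. s \<ge> 0 \<and> hausdorff_measure s F_half_one = 0}"
      using H_zero[OF r] by auto
    hence "hausdorff_dim F_half_one \<le> ereal r" unfolding hausdorff_dim_def by (rule Inf_lower)
    thus ?thesis using real by simp
  qed (use y in auto)
qed


end
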